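(* Let $\theta$ satisfy Condition 1 with constants $0\le\sigma<1$, $\kappa\ge0$, $A\ge0$, and let $\beta\in\mathbb{R}$. Then the product $\mathfrak{S}_\theta=\prod_p(1+\theta_p/p)$ converges absolutely, and there is a constant $C(\theta,\beta)$ depending only on $\theta$ and $\beta$ such that for $x\ge2$ \[ \sum_{n\le x}n^\beta\phi_\theta(n)=\mathfrak{S}_\theta M_\beta(x)+C(\theta,\beta)+O_{\sigma,\kappa,A,\beta}\big(x^{\sigma+\beta}(\log x)^\kappa\big). \]
   Context: $p$ denotes a prime. Let $\theta:\mathbb{N}\to\mathbb{C}$, $n\mapsto\theta_n$, be a multiplicative function supported on square-free integers; the $\theta$-totient is $\phi_\theta(n)=\prod_{p\mid n}(1+\theta_p)=\sum_{d\mid n}\theta_d$. Condition 1: there are constants $0\le\sigma<1$ and $\kappa,A\ge0$ such that $\sum_{p\le x}|\theta_p|p^{-\sigma}\le\kappa\log\log x+A$ for all $x\ge2$. For real $\beta$, $M_\beta(x)=x^{\beta+1}/(\beta+1)$ if $\beta\ne-1$ and $M_{-1}(x)=\log x$. *)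

theory Defs
  imports "HOL-Analysis.Analysis" "HOL-Computational_Algebra.Squarefree"
begin

definition theta_admissible :: "(nat \<Rightarrow> complex) \<Rightarrow> bool" where
  "theta_admissible \<theta> \<longleftrightarrow>
     \<theta> 1 = 1 \<and>
     (\<forall>m n. coprime m n \<longrightarrow> \<theta> (m * n) = \<theta> m * \<theta> n) \<and>
     (\<forall>n. \<not> squarefree n \<longrightarrow> \<theta> n = 0)"

definition phi_theta :: "(nat \<Rightarrow> complex) \<Rightarrow> nat \<Rightarrow> complex" where
  "phi_theta \<theta> n = (\<Sum>d | d dvd n. \<theta> d)"

definition condition1 :: "(nat \<Rightarrow> complex) \<Rightarrow> real \<Rightarrow> real \<Rightarrow> real \<Rightarrow> bool" where
  "condition1 \<theta> \<sigma> \<kappa> A \<longleftrightarrow>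
     (\<forall>x::real. x \<ge> 2 \<longrightarrow>
        (\<Sum>p | prime p \<and> real p \<le> x. norm (\<theta> p) * real p powr (-\<sigma>)) \<le> \<kappa> * ln (ln x) + A)"

text \<open>Factors of the Euler product \<open>\<prod>_p (1 + \<theta>_p / p)\<close>, indexed by all naturals
  (factor 1 at non-primes).\<close>
definition euler_factor :: "(nat \<Rightarrow> complex) \<Rightarrow> nat \<Rightarrow> complex" where
  "euler_factor \<theta> n = (if prime n then 1 + \<theta> n / of_nat n else 1)"

definition singular_series :: "(nat \<Rightarrow> complex) \<Rightarrow> complex" where
  "singular_series \<theta> = prodinf (euler_factor \<theta>)"

definition M_beta :: "real \<Rightarrow> real \<Rightarrow> real" where
  "M_beta \<beta> x = (if \<beta> = -1 then ln x else x powr (\<beta> + 1) / (\<beta> + 1))"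

end

theory Submission
  imports Defs "HOL-Real_Asymp.Real_Asymp"
begin


lemma prime_factors_prod_primes:
  assumes "finite D" "\<forall>p\<in>D. prime (p::nat)"
  shows "prime_factors (\<Prod>D) = D"
proof -
  have nz: "\<Prod>D \<noteq> 0" using assms by (auto dest: prime_gt_0_nat)
  show ?thesis
  proof (intro set_eqI iffI)
    fix q assume "q \<in> prime_factors (\<Prod>D)"
    hence q: "prime q" "q dvd \<Prod>D" using nz by (auto simp: in_prime_factors_iff)
    then obtain p where "p \<in> D" "q dvd p" using assms(1) prime_dvd_prod_iff[of D q] 
      by (metis prod.cong id_apply)
    thus "q \<in> D" using assms q by (metis prime_nat_iff primes_dvd_imp_eq) 
  next
    fix q assume "q \<in> D" thus "q \<in> prime_factors (\<Prod>D)" using nz assms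
      by (auto simp: in_prime_factors_iff dvd_prod_eqI)
  qed
qed

lemma squarefree_prod_pf:
  assumes "squarefree (d::nat)"
  shows "d = \<Prod>(prime_factors d)"
proof -
  have "d \<noteq> 0" using assms by (metis not_squarefree_0)
  hence "d = (\<Prod>p \<in> prime_factors d. p ^ multiplicity p d)" using prime_factorization_nat by auto
  also have "\<dots> = \<Prod>(prime_factors d)"
    using assms \<open>d\<noteq>0\<close> by (intro prod.cong) (auto simp: squarefree_factorial_semiring')
  finally show ?thesis .
qed

lemma sum_Pow_prod:
  fixes h :: "nat \<Rightarrow> 'a::comm_semiring_1"
  assumes "finite P" "\<forall>p\<in>P. prime p" "h 1 = 1"
    "\<And>m n. coprime m n \<Longrightarrow> 0<m \<Longrightarrow> 0<n \<Longrightarrow> h (m*n) = h m * h n"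
  shows "(\<Sum>D\<in>Pow P. h (\<Prod>D)) = (\<Prod>p\<in>P. 1 + h p)"
  using assms(1,2)
proof (induction P rule: finite_induct)
  case empty
  then show ?case using assms by simp
next
  case (insert p F)
  have pr: "prime p" using insert by auto
  have disj: "Pow F \<inter> insert p ` Pow F = {}" using insert by auto
  have inj: "inj_on (insert p) (Pow F)" using insert by (auto simp: inj_on_def)
  have "(\<Sum>D\<in>Pow (insert p F). h (\<Prod>D)) = (\<Sum>D\<in>Pow F. h (\<Prod>D)) + (\<Sum>D\<in>insert p ` Pow F. h (\<Prod>D))"
    using insert disj by (simp add: Pow_insert sum.union_disjoint)
  also have "(\<Sum>D\<in>insert p ` Pow F. h (\<Prod>D)) = (\<Sum>D\<in>Pow F. h (\<Prod>(insert p D)))"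
    using inj by (simp add: sum.reindex)
  also have "\<dots> = (\<Sum>D\<in>Pow F. h p * h (\<Prod>D))"
  proof (intro sum.cong refl)
    fix D assume D: "D \<in> Pow F"
    have fD: "finite D" using D insert finite_subset by auto
    have pD: "p \<notin> D" using D insert by auto
    have pos: "0 < \<Prod>D" using D insert by (auto intro!: prod_pos dest: prime_gt_0_nat)
    have cop: "coprime p (\<Prod>D)"
    proof (rule ccontr)
      assume "\<not> coprime p (\<Prod>D)"
      hence "p dvd \<Prod>D" using pr prime_imp_coprime by blast
      then obtain q where "q \<in> D" "p dvd q" using pr fD prime_dvd_prod_iff[of D p] by (metis id_apply)
      moreover have "prime q" using \<open>q\<in>D\<close> D insert by auto
      ultimately have "p = q" using pr by (metis prime_nat_iff primes_dvd_imp_eq)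
      thus False using pD \<open>q\<in>D\<close> by auto
    qed
    show "h (\<Prod>(insert p D)) = h p * h (\<Prod>D)"
      using fD pD cop pos pr assms(4)[of p "\<Prod>D"] by (simp add: prime_gt_0_nat)
  qed
  also have "\<dots> = h p * (\<Sum>D\<in>Pow F. h (\<Prod>D))" by (simp add: sum_distrib_left)
  finally show ?case using insert by (simp add: algebra_simps)
qed



definition Dset :: "real \<Rightarrow> nat set" where "Dset y = {d. 0 < d \<and> real d \<le> y}"
definition Iv :: "real \<Rightarrow> real \<Rightarrow> nat set" where "Iv y z = {d. y < real d \<and> real d \<le> z}"

lemma finite_Dset[simp]: "finite (Dset y)"
  by (rule finite_subset[of _ "{..nat \<lfloor>y\<rfloor>}"]) (auto simp: Dset_def le_nat_floor)
lemma finite_Iv[simp]: "finite (Iv y z)"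
  by (rule finite_subset[of _ "{..nat \<lfloor>z\<rfloor>}"]) (auto simp: Iv_def le_nat_floor)

locale thctx =
  fixes \<theta> :: "nat \<Rightarrow> complex" and \<sigma> \<kappa> A :: real
  assumes adm: "theta_admissible \<theta>" and c1: "condition1 \<theta> \<sigma> \<kappa> A"
    and sig0: "0 \<le> \<sigma>" and sig1: "\<sigma> < 1" and kap: "\<kappa> \<ge> 0" and A0: "A \<ge> 0"
begin

lemma th1: "\<theta> 1 = 1" using adm by (simp add: theta_admissible_def)
lemma thmult: "coprime m n \<Longrightarrow> \<theta> (m*n) = \<theta> m * \<theta> n" using adm by (simp add: theta_admissible_def)
lemma thsqf: "\<not> squarefree n \<Longrightarrow> \<theta> n = 0" using adm by (simp add: theta_admissible_def)
lemma th0: "\<theta> 0 = 0" using thsqf by simp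

definition Pset :: "real \<Rightarrow> nat set" where "Pset y = {p. prime p \<and> real p \<le> y}"
lemma finite_Pset[simp]: "finite (Pset y)"
  by (rule finite_subset[of _ "{..nat \<lfloor>y\<rfloor>}"]) (auto simp: Pset_def le_nat_floor)

lemma sqf_in_Q:
  assumes "d \<in> Dset y" "squarefree d"
  shows "d \<in> (\<lambda>D. \<Prod>D) ` Pow (Pset y)"
proof -
  have "d = \<Prod>(prime_factors d)" using squarefree_prod_pf assms by auto
  moreover have "prime_factors d \<subseteq> Pset y"
  proof
    fix p assume "p \<in> prime_factors d"
    hence "prime p" "p dvd d" by auto
    moreover have "d > 0" using assms by (auto simp: Dset_def)
    ultimately have "p \<le> d" by (simp add: dvd_imp_le)
    thus "p \<in> Pset y" using assms \<open>prime p\<close> unfolding Pset_def Dset_def by auto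
  qed
  ultimately show ?thesis by blast
qed

lemma inj_prod_Pow: "inj_on (\<lambda>D. \<Prod>D) (Pow (Pset y))"
proof (rule inj_onI)
  fix D E assume "D \<in> Pow (Pset y)" "E \<in> Pow (Pset y)" "\<Prod>D = \<Prod>E"
  moreover have "finite D" "finite E" using calculation finite_subset[OF _ finite_Pset] by auto
  ultimately show "D = E" using prime_factors_prod_primes[of D] prime_factors_prod_primes[of E]
    unfolding Pset_def by auto
qed

lemma Q_pos: "d \<in> (\<lambda>D. \<Prod>D) ` Pow (Pset y) \<Longrightarrow> d > 0"
proof -
  assume "d \<in> (\<lambda>D. \<Prod>D) ` Pow (Pset y)"
  then obtain D where "D \<subseteq> Pset y" "d = \<Prod>D" by auto
  moreover have "finite D" using calculation finite_subset[OF _ finite_Pset] by auto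
  ultimately show "d > 0" by (auto simp: Pset_def intro!: prod_pos dest: prime_gt_0_nat)
qed

lemma sum_le_Pow:
  fixes h :: "nat \<Rightarrow> real"
  assumes h0: "\<And>d. h d \<ge> 0" and hz: "\<And>d. \<not> squarefree d \<Longrightarrow> h d = 0"
  shows "(\<Sum>d\<in>Dset y. h d) \<le> (\<Sum>D\<in>Pow (Pset y). h (\<Prod>D))"
proof -
  have "(\<Sum>d\<in>Dset y. h d) = (\<Sum>d\<in>Dset y \<inter> {d. squarefree d}. h d)"
    by (intro sum.mono_neutral_right) (auto simp: hz)
  also have "\<dots> \<le> (\<Sum>d\<in>(\<lambda>D. \<Prod>D) ` Pow (Pset y). h d)"
  proof (intro sum_mono2)
    show "finite ((\<lambda>D. \<Prod>D) ` Pow (Pset y))" by simp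
    show "Dset y \<inter> {d. squarefree d} \<subseteq> (\<lambda>D. \<Prod>D) ` Pow (Pset y)"
    proof
      fix d assume d: "d \<in> Dset y \<inter> {d. squarefree d}"
      hence "d = \<Prod>(prime_factors d)" using squarefree_prod_pf by auto
      moreover have "prime_factors d \<subseteq> Pset y"
      proof
        fix p assume "p \<in> prime_factors d"
        hence "prime p" "p dvd d" by auto
        moreover have "d > 0" using d by (auto simp: Dset_def)
        ultimately have "p \<le> d" by (simp add: dvd_imp_le)
        thus "p \<in> Pset y" using d \<open>prime p\<close> unfolding Pset_def Dset_def by auto
      qed
      ultimately show "d \<in> (\<lambda>D. \<Prod>D) ` Pow (Pset y)" by blast
    qed
  qed (auto simp: h0)
  also have "\<dots> = (\<Sum>D\<in>Pow (Pset y). h (\<Prod>D))"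
  proof (rule sum.reindex_cong[where l="\<lambda>D. \<Prod>D"])
    show "inj_on (\<lambda>D. \<Prod>D) (Pow (Pset y))"
    proof (rule inj_onI)
      fix D E assume "D \<in> Pow (Pset y)" "E \<in> Pow (Pset y)" "\<Prod>D = \<Prod>E"
      moreover have "finite D" "finite E" using calculation finite_subset[OF _ finite_Pset] by auto
      ultimately show "D = E" using prime_factors_prod_primes[of D] prime_factors_prod_primes[of E]
        unfolding Pset_def by auto
    qed
  qed auto
  finally show ?thesis .
qed

lemma Pow_prod_eq:
  fixes h :: "nat \<Rightarrow> 'a::comm_semiring_1"
  assumes "h 1 = 1" "\<And>m n. coprime m n \<Longrightarrow> 0<m \<Longrightarrow> 0<n \<Longrightarrow> h (m*n) = h m * h n"
  shows "(\<Sum>D\<in>Pow (Pset y). h (\<Prod>D)) = (\<Prod>p\<in>Pset y. 1 + h p)"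
  by (rule sum_Pow_prod) (use assms finite_Pset[of y] in \<open>auto simp: Pset_def\<close>)

lemma rankin:
  assumes y: "y \<ge> 1"
  shows "(\<Sum>d\<in>Dset y. norm (\<theta> d) * real d powr (-\<sigma>)) \<le> exp A * (ln y + 1) powr \<kappa>"
proof (cases "y < 2")
  case True
  have "Dset y = {1}" using True y by (auto simp: Dset_def)
  moreover have "1 \<le> exp A" using A0 by simp
  moreover have "1 \<le> (ln y + 1) powr \<kappa>" using y kap by (intro ge_one_powr_ge_zero) auto
  ultimately have "1 * 1 \<le> exp A * (ln y + 1) powr \<kappa>" by (intro mult_mono) auto
  thus ?thesis using th1 \<open>Dset y = {1}\<close> by simp
next
  case False
  define h where "h d = norm (\<theta> d) * real d powr (-\<sigma>)" for d
  have "(\<Sum>d\<in>Dset y. h d) \<le> (\<Sum>D\<in>Pow (Pset y). h (\<Prod>D))"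
    by (rule sum_le_Pow) (auto simp: h_def thsqf)
  also have "\<dots> = (\<Prod>p\<in>Pset y. 1 + h p)"
  proof (rule Pow_prod_eq)
    show "h 1 = 1" using th1 by (simp add: h_def)
    fix m n :: nat assume "coprime m n" "0 < m" "0 < n"
    thus "h (m*n) = h m * h n"
      by (simp add: h_def thmult norm_mult powr_mult)
  qed
  also have "\<dots> \<le> (\<Prod>p\<in>Pset y. exp (h p))"
    by (intro prod_mono) (auto simp: h_def exp_ge_add_one_self add_nonneg_nonneg)
  also have "\<dots> = exp (\<Sum>p\<in>Pset y. h p)" by (simp add: exp_sum)
  also have "\<dots> \<le> exp (\<kappa> * ln (ln y) + A)"
    using c1 False unfolding condition1_def h_def Pset_def by auto
  also have "\<dots> = exp A * (ln y) powr \<kappa>"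
    using False by (simp add: powr_def exp_add mult.commute)
  also have "\<dots> \<le> exp A * (ln y + 1) powr \<kappa>"
    using False kap by (intro mult_left_mono powr_mono2) auto
  finally show ?thesis by (simp add: h_def)
qed

end


definition Gc :: "real \<Rightarrow> real \<Rightarrow> real" where
  "Gc \<delta> q = (\<Sum>j. (2 powr \<delta>)^j * (real j + 2) powr q)"

lemma Gc_summable:
  assumes "\<delta> < 0"
  shows "summable (\<lambda>j. (2 powr \<delta>)^j * (real j + 2) powr q)"
proof -
  define r where "r = 2 powr \<delta>"
  have r0: "0 < r" and r1: "r < 1" using assms by (auto simp: r_def powr_less_one)
  have lim: "(\<lambda>j. ((real j + 3) / (real j + 2)) powr q) \<longlonglongrightarrow> 1 powr q"
  proof -
    have "(\<lambda>j. (real j + 3) / (real j + 2)) \<longlonglongrightarrow> 1" by real_asymp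
    thus ?thesis by (rule tendsto_powr[OF _ tendsto_const]) simp
  qed
  have "(1 + r) / (2 * r) > 1" using r0 r1 by (simp add: field_simps)
  hence "eventually (\<lambda>j. ((real j + 3) / (real j + 2)) powr q < (1 + r) / (2 * r)) sequentially"
    using lim by (intro order_tendstoD) auto
  then obtain N where N: "\<And>j. j \<ge> N \<Longrightarrow> ((real j + 3) / (real j + 2)) powr q < (1 + r) / (2 * r)"
    by (auto simp: eventually_sequentially)
  show ?thesis unfolding r_def[symmetric]
  proof (rule summable_ratio_test[where c="(1+r)/2" and N=N])
    show "(1+r)/2 < 1" using r1 by simp
    fix j assume j: "j \<ge> N"
    have e: "(real (Suc j) + 2) powr q = ((real j + 3) / (real j + 2)) powr q * (real j + 2) powr q"
    proof -
      have "(real j + 3) = ((real j + 3) / (real j + 2)) * (real j + 2)" by simp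
      hence "(real j + 3) powr q = ((real j + 3) / (real j + 2)) powr q * (real j + 2) powr q"
        by (metis powr_mult)
      moreover have "real (Suc j) + 2 = real j + 3" by simp
      ultimately show ?thesis by metis
    qed
    have "norm (r ^ Suc j * (real (Suc j) + 2) powr q) = r * ((real j + 3) / (real j + 2)) powr q * (r^j * (real j + 2) powr q)"
      unfolding e using r0 by (simp add: abs_mult)
    also have "\<dots> \<le> r * ((1 + r) / (2 * r)) * (r^j * (real j + 2) powr q)"
      using N[OF j] r0 by (intro mult_right_mono mult_left_mono) auto
    also have "\<dots> = (1+r)/2 * norm (r^j * (real j + 2) powr q)" using r0 by simp
    finally show "norm (r ^ Suc j * (real (Suc j) + 2) powr q) \<le> (1+r)/2 * norm (r^j * (real j + 2) powr q)" .
  qed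
qed

lemma Gc_nonneg: "\<delta> < 0 \<Longrightarrow> Gc \<delta> q \<ge> 0"
  unfolding Gc_def by (intro suminf_nonneg Gc_summable) auto

lemma sum_le_Gc: "\<delta> < 0 \<Longrightarrow> (\<Sum>j<J. (2 powr \<delta>)^j * (real j + 2) powr q) \<le> Gc \<delta> q"
  unfolding Gc_def by (intro sum_le_suminf Gc_summable) auto



lemma pow2_powr0: "((2::real)^j) powr \<delta> = (2 powr \<delta>)^j"
proof -
  have "((2::real)^j) powr \<delta> = (2 powr real j) powr \<delta>" by (simp add: powr_realpow)
  also have "\<dots> = (2 powr \<delta>) powr real j" by (simp add: powr_powr mult.commute)
  also have "\<dots> = (2 powr \<delta>)^j" by (simp add: powr_realpow)
  finally show ?thesis .
qed

lemma pow2_powr: "((2::real)^j * x) powr \<delta> = (2 powr \<delta>)^j * x powr \<delta>"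
  by (simp add: powr_mult pow2_powr0)

lemma ln_bound_j: "x > 0 \<Longrightarrow> ln x \<ge> 0 \<Longrightarrow> ln ((2::real)^(Suc j) * x) + 1 \<le> (real j + 2) * (ln x + 1)"
proof -
  assume x: "x > 0" "ln x \<ge> 0"
  have "ln ((2::real)^(Suc j) * x) = real (Suc j) * ln 2 + ln x" using x by (simp add: ln_mult ln_realpow algebra_simps)
  moreover have "ln (2::real) \<le> 1" using ln_le_minus_one[of 2] by simp
  ultimately have "ln ((2::real)^(Suc j) * x) \<le> real (Suc j) + ln x"
    by (simp add: mult_left_le)
  also have "\<dots> + 1 \<le> (real j + 2) * (ln x + 1)" using x by (simp add: algebra_simps)
  finally show ?thesis by simp
qed

context thctx begin

definition Fw :: "real \<Rightarrow> nat \<Rightarrow> real \<Rightarrow> nat \<Rightarrow> real" where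
  "Fw \<delta> p x d = norm (\<theta> d) * real d powr (\<delta> - \<sigma>) * (1 + ln (real d / x)) ^ p"

lemma Fw_nonneg: "x > 0 \<Longrightarrow> real d > x \<Longrightarrow> Fw \<delta> p x d \<ge> 0"
  unfolding Fw_def by (intro mult_nonneg_nonneg zero_le_power) auto

lemma block:
  assumes x: "x \<ge> 1" and \<delta>: "\<delta> < 0"
  shows "(\<Sum>d\<in>Iv (2^j*x) (2^(Suc j)*x). Fw \<delta> p x d)
     \<le> exp A * x powr \<delta> * (ln x + 1) powr \<kappa> * ((2 powr \<delta>)^j * (real j + 2) powr (\<kappa> + real p))"
proof -
  define u where "u = (2::real)^j * x"
  have u1: "u \<ge> 1" using x unfolding u_def by (smt (verit) mult_le_cancel_right1 one_le_power)
  have "(\<Sum>d\<in>Iv u (2^(Suc j)*x). Fw \<delta> p x d)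
      \<le> (\<Sum>d\<in>Iv u (2^(Suc j)*x). norm (\<theta> d) * real d powr (-\<sigma>) * (u powr \<delta> * (real j + 2)^p))"
  proof (intro sum_mono)
    fix d assume d: "d \<in> Iv u (2^(Suc j)*x)"
    have dpos: "real d > 0" and du: "u < real d" and dz: "real d \<le> 2^(Suc j) * x"
      using d u1 by (auto simp: Iv_def)
    have "real d powr (\<delta> - \<sigma>) = real d powr (-\<sigma>) * real d powr \<delta>"
      by (simp add: powr_add[symmetric])
    also have "\<dots> \<le> real d powr (-\<sigma>) * u powr \<delta>"
      using du u1 \<delta> by (intro mult_left_mono powr_mono2') auto
    finally have 1: "real d powr (\<delta> - \<sigma>) \<le> real d powr (-\<sigma>) * u powr \<delta>" .
    have xd: "x \<le> real d" using du u1 x unfolding u_def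
      by (smt (verit) mult_le_cancel_right1 one_le_power)
    have lnpos: "0 \<le> ln (real d / x)" using xd x by simp
    have "ln (real d / x) \<le> ln (2^(Suc j))"
      using dz x dpos by (intro ln_mono) (auto simp: field_simps)
    also have "\<dots> = real (Suc j) * ln 2" by (rule ln_realpow)
    also have "\<dots> \<le> real (Suc j)" using ln_le_minus_one[of 2] by (simp add: mult_left_le)
    finally have "1 + ln (real d / x) \<le> real j + 2" by simp
    hence 2: "(1 + ln (real d / x))^p \<le> (real j + 2)^p" using lnpos by (intro power_mono) auto
    show "Fw \<delta> p x d \<le> norm (\<theta> d) * real d powr (-\<sigma>) * (u powr \<delta> * (real j + 2)^p)"
    proof -
      have "Fw \<delta> p x d \<le> norm (\<theta> d) * (real d powr (-\<sigma>) * u powr \<delta>) * (real j + 2)^p"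
        unfolding Fw_def using 1 2 lnpos
        by (intro mult_mono mult_left_mono) auto
      thus ?thesis by (simp add: mult_ac)
    qed
  qed
  also have "\<dots> = (u powr \<delta> * (real j + 2)^p) * (\<Sum>d\<in>Iv u (2^(Suc j)*x). norm (\<theta> d) * real d powr (-\<sigma>))"
    by (simp add: sum_distrib_left mult.commute)
  also have "\<dots> \<le> (u powr \<delta> * (real j + 2)^p) * (\<Sum>d\<in>Dset (2^(Suc j)*x). norm (\<theta> d) * real d powr (-\<sigma>))"
    using u1 by (intro mult_left_mono sum_mono2[OF finite_Dset]) (auto simp: Iv_def Dset_def)
  also have "\<dots> \<le> (u powr \<delta> * (real j + 2)^p) * (exp A * (ln (2^(Suc j)*x) + 1) powr \<kappa>)"
  proof (intro mult_left_mono rankin)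
    show "1 \<le> (2::real)^(Suc j) * x" using x by (smt (verit) mult_le_cancel_right1 one_le_power)
  qed auto
  also have "\<dots> \<le> (u powr \<delta> * (real j + 2)^p) * (exp A * ((real j + 2) * (ln x + 1)) powr \<kappa>)"
  proof -
    have "1 \<le> (2::real)^(Suc j) * x" using x by (smt (verit) mult_le_cancel_right1 one_le_power)
    hence "0 \<le> ln ((2::real)^(Suc j) * x)" by simp
    thus ?thesis using x kap by (intro mult_left_mono powr_mono2 ln_bound_j) auto
  qed
  also have "\<dots> = exp A * x powr \<delta> * (ln x + 1) powr \<kappa> * ((2 powr \<delta>)^j * ((real j + 2)^p * (real j + 2) powr \<kappa>))"
    by (simp add: u_def pow2_powr powr_mult mult_ac) (metis pow2_powr0)
  also have "(real j + 2)^p * (real j + 2) powr \<kappa> = (real j + 2) powr (\<kappa> + real p)"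
    by (simp add: powr_add powr_realpow)
  finally show ?thesis by (simp add: u_def)
qed

lemma dyadic:
  assumes x: "x \<ge> 1" and \<delta>: "\<delta> < 0"
  shows "(\<Sum>d\<in>Iv x z. Fw \<delta> p x d) \<le> exp A * x powr \<delta> * (ln x + 1) powr \<kappa> * Gc \<delta> (\<kappa> + real p)"
proof -
  define E where "E = exp A * x powr \<delta> * (ln x + 1) powr \<kappa>"
  have E0: "E \<ge> 0" using x by (simp add: E_def)
  have ind: "(\<Sum>d\<in>Iv x (2^J*x). Fw \<delta> p x d) \<le> E * (\<Sum>j<J. (2 powr \<delta>)^j * (real j + 2) powr (\<kappa> + real p))" for J
  proof (induction J)
    case 0
    have "Iv x (2^0*x) = {}" by (auto simp: Iv_def)
    then show ?case by simp
  next
    case (Suc J)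
    have x2: "x \<le> 2^J * x" using x by (smt (verit) mult_le_cancel_right1 one_le_power)
    have "Iv x (2^Suc J*x) = Iv x (2^J*x) \<union> Iv (2^J*x) (2^Suc J*x)"
      using x2 by (auto simp: Iv_def)
    moreover have "Iv x (2^J*x) \<inter> Iv (2^J*x) (2^Suc J*x) = {}" by (auto simp: Iv_def)
    ultimately have "(\<Sum>d\<in>Iv x (2^Suc J*x). Fw \<delta> p x d) = (\<Sum>d\<in>Iv x (2^J*x). Fw \<delta> p x d) + (\<Sum>d\<in>Iv (2^J*x) (2^Suc J*x). Fw \<delta> p x d)"
      by (simp add: sum.union_disjoint)
    also have "\<dots> \<le> E * (\<Sum>j<J. (2 powr \<delta>)^j * (real j + 2) powr (\<kappa> + real p)) + E * ((2 powr \<delta>)^J * (real J + 2) powr (\<kappa> + real p))"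
      using Suc.IH block[OF x \<delta>, where j=J and p=p] by (simp add: E_def)
    finally show ?case by (simp add: algebra_simps)
  qed
  define J where "J = nat \<lceil>z\<rceil>"
  have "z \<le> real J" by (simp add: J_def) linarith
  also have "real J \<le> 2^J" using less_exp[of J] by (metis of_nat_le_iff of_nat_numeral of_nat_power less_imp_le)
  also have "\<dots> \<le> 2^J * x" using x by (smt (verit) mult_le_cancel_left1 zero_less_power)
  finally have zJ: "z \<le> 2^J * x" .
  have "(\<Sum>d\<in>Iv x z. Fw \<delta> p x d) \<le> (\<Sum>d\<in>Iv x (2^J*x). Fw \<delta> p x d)"
    using zJ x by (intro sum_mono2[OF finite_Iv]) (auto simp: Iv_def intro!: Fw_nonneg)
  also have "\<dots> \<le> E * (\<Sum>j<J. (2 powr \<delta>)^j * (real j + 2) powr (\<kappa> + real p))" by (rule ind)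
  also have "\<dots> \<le> E * Gc \<delta> (\<kappa> + real p)" using E0 \<delta> by (intro mult_left_mono sum_le_Gc)
  finally show ?thesis by (simp add: E_def)
qed

end


definition tlx :: "real \<Rightarrow> (nat \<Rightarrow> 'a::real_normed_vector) \<Rightarrow> nat \<Rightarrow> 'a" where
  "tlx x f d = (if x < real d then f d else 0)"

lemma tail_lemma:
  fixes f :: "nat \<Rightarrow> 'a::banach" and b :: "nat \<Rightarrow> real"
  assumes fb: "\<And>d. x < real d \<Longrightarrow> norm (f d) \<le> b d"
    and bK: "\<And>z. (\<Sum>d\<in>Iv x z. b d) \<le> K"
  shows "summable (tlx x f)" "norm (suminf (tlx x f)) \<le> K"
proof -
  define g where "g d = (if x < real d then b d else 0)" for d
  have g0: "g d \<ge> 0" for d 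
  proof (cases "x < real d")
    case True
    have "0 \<le> norm (f d)" by simp
    also have "\<dots> \<le> b d" using fb[OF True] .
    finally show ?thesis using True by (simp add: g_def)
  qed (simp add: g_def)
  have gs: "sum g {..<n} \<le> K" for n
  proof -
    have "sum g {..<n} = sum g ({..<n} \<inter> {d. x < real d})"
      by (intro sum.mono_neutral_right) (auto simp: g_def)
    also have "\<dots> = sum b ({..<n} \<inter> {d. x < real d})" by (intro sum.cong) (auto simp: g_def)
    also have "\<dots> \<le> sum b (Iv x n)"
      by (intro sum_mono2[OF finite_Iv]) (auto simp: Iv_def intro: order_trans[OF norm_ge_zero fb])
    also have "\<dots> \<le> K" by (rule bK)
    finally show ?thesis .
  qed
  have sg: "summable g" by (rule summableI_nonneg_bounded[OF g0 gs])
  have nb: "norm (tlx x f d) \<le> g d" for d using fb[of d] by (auto simp: tlx_def g_def)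
  show "summable (tlx x f)" by (rule summable_comparison_test[OF _ sg]) (use nb in auto)
  have "norm (suminf (tlx x f)) \<le> suminf g" by (rule norm_suminf_le[OF nb sg])
  also have "\<dots> \<le> K" by (rule suminf_le_const[OF sg gs])
  finally show "norm (suminf (tlx x f)) \<le> K" .
qed

lemma split_tail:
  fixes f :: "nat \<Rightarrow> 'a::banach"
  assumes s: "summable (tlx x f)" and x: "x \<ge> 0" and f0: "f 0 = 0"
  shows "summable f" "suminf f = (\<Sum>d\<in>Dset x. f d) + suminf (tlx x f)"
proof -
  define h where "h d = (if real d \<le> x then f d else 0)" for d
  have fin: "finite {d::nat. real d \<le> x}"
    by (rule finite_subset[of _ "{..nat \<lfloor>x\<rfloor>}"]) (auto simp: le_nat_floor)
  have sh: "summable h" by (rule summable_finite[OF fin]) (auto simp: h_def)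
  have eq: "f = (\<lambda>d. h d + tlx x f d)" by (auto simp: h_def tlx_def)
  show "summable f" by (subst eq) (intro summable_add sh s)
  have "suminf h = (\<Sum>d\<in>{d. real d \<le> x}. h d)" by (rule suminf_finite[OF fin]) (auto simp: h_def)
  also have "\<dots> = (\<Sum>d\<in>Dset x. f d)"
    using f0 by (intro sum.mono_neutral_cong_right fin) (auto simp: Dset_def h_def intro: gr0I)
  finally have "suminf h = (\<Sum>d\<in>Dset x. f d)" .
  moreover have "suminf f = suminf h + suminf (tlx x f)"
    by (subst eq) (intro suminf_add[symmetric] sh s)
  ultimately show "suminf f = (\<Sum>d\<in>Dset x. f d) + suminf (tlx x f)" by simp
qed



context thctx begin

lemma tail_Fw:
  fixes f :: "nat \<Rightarrow> 'a::banach"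
  assumes x: "x \<ge> 1" and \<delta>: "\<delta> < 0" and fb: "\<And>d. x < real d \<Longrightarrow> norm (f d) \<le> Fw \<delta> p x d"
  shows "summable (tlx x f)"
    "norm (suminf (tlx x f)) \<le> exp A * x powr \<delta> * (ln x + 1) powr \<kappa> * Gc \<delta> (\<kappa> + real p)"
  using tail_lemma[of x f "Fw \<delta> p x", OF fb dyadic[OF x \<delta>]] by auto

definition f1 :: "nat \<Rightarrow> complex" where "f1 d = \<theta> d / of_nat d"
definition b1 :: "nat \<Rightarrow> real" where "b1 d = norm (\<theta> d) / real d"

lemma f1_Fw: "x > 0 \<Longrightarrow> x < real d \<Longrightarrow> norm (f1 d) \<le> Fw (\<sigma> - 1) 0 x d"
  by (simp add: f1_def Fw_def norm_divide powr_minus divide_inverse norm_mult norm_inverse)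

lemma b1_Fw: "x > 0 \<Longrightarrow> x < real d \<Longrightarrow> norm (b1 d) \<le> Fw (\<sigma> - 1) 0 x d"
  by (simp add: b1_def Fw_def powr_minus divide_inverse)

lemma tail1:
  assumes "x \<ge> 1"
  shows "summable (tlx x f1)"
    "norm (suminf (tlx x f1)) \<le> exp A * x powr (\<sigma> - 1) * (ln x + 1) powr \<kappa> * Gc (\<sigma> - 1) \<kappa>"
  using tail_Fw[of x "\<sigma> - 1" f1 0] assms sig1 f1_Fw[of x] by auto

lemma summable_f1: "summable f1"
  using split_tail(1)[OF tail1(1)[of 1]] by (simp add: f1_def)

lemma summable_b1: "summable b1"
proof -
  have "summable (tlx 1 b1)"
    using tail_Fw[of 1 "\<sigma> - 1" b1 0] sig1 b1_Fw[of 1] by auto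
  thus ?thesis using split_tail(1)[of 1 b1] by (simp add: b1_def)
qed

lemma b1_nonneg: "b1 d \<ge> 0" by (simp add: b1_def)

lemma euler_abs: "abs_convergent_prod (euler_factor \<theta>)"
proof (rule summable_imp_abs_convergent_prod)
  show "summable (\<lambda>i. norm (euler_factor \<theta> i - 1))"
  proof (rule summable_comparison_test[OF _ summable_b1])
    show "\<exists>N. \<forall>n\<ge>N. norm (norm (euler_factor \<theta> n - 1)) \<le> b1 n"
      by (auto simp: euler_factor_def b1_def norm_divide)
  qed
qed

lemma euler_partial:
  "(\<Prod>i\<le>n. euler_factor \<theta> i) = (\<Sum>D\<in>Pow (Pset (real n)). f1 (\<Prod>D))"
proof -
  have "(\<Prod>i\<le>n. euler_factor \<theta> i) = (\<Prod>p\<in>Pset (real n). 1 + f1 p)"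
    by (intro prod.mono_neutral_cong_right) (auto simp: Pset_def euler_factor_def f1_def)
  also have "\<dots> = (\<Sum>D\<in>Pow (Pset (real n)). f1 (\<Prod>D))"
  proof (rule Pow_prod_eq[symmetric])
    show "f1 1 = 1" using th1 by (simp add: f1_def)
    fix m n :: nat assume "coprime m n" "0 < m" "0 < n"
    thus "f1 (m*n) = f1 m * f1 n" by (simp add: f1_def thmult)
  qed
  finally show ?thesis .
qed

lemma euler_diff:
  "norm ((\<Prod>i\<le>n. euler_factor \<theta> i) - (\<Sum>d\<in>Dset (real n). f1 d)) \<le> suminf b1 - (\<Sum>i\<le>n. b1 i)"
proof -
  define Q where "Q = (\<lambda>D. \<Prod>D) ` Pow (Pset (real n))"
  have fQ: "finite Q" by (simp add: Q_def)
  have "(\<Prod>i\<le>n. euler_factor \<theta> i) = (\<Sum>d\<in>Q. f1 d)"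
    unfolding euler_partial Q_def by (rule sum.reindex[OF inj_prod_Pow, symmetric, unfolded comp_def])
  moreover have "(\<Sum>d\<in>Dset (real n). f1 d) = (\<Sum>d\<in>Dset (real n) \<inter> Q. f1 d)"
  proof (intro sum.mono_neutral_right)
    show "\<forall>i\<in>Dset (real n) - Dset (real n) \<inter> Q. f1 i = 0"
    proof
      fix i assume i: "i \<in> Dset (real n) - Dset (real n) \<inter> Q"
      hence "\<not> squarefree i" using sqf_in_Q[of i "real n"] unfolding Q_def by blast
      thus "f1 i = 0" by (simp add: f1_def thsqf)
    qed
  qed auto
  moreover have "(\<Sum>d\<in>Q. f1 d) = (\<Sum>d\<in>Dset (real n) \<inter> Q. f1 d) + (\<Sum>d\<in>Q - Dset (real n). f1 d)"
    using sum.Int_Diff[OF fQ, of f1 "Dset (real n)"] by (simp add: Int_commute)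
  ultimately have "(\<Prod>i\<le>n. euler_factor \<theta> i) - (\<Sum>d\<in>Dset (real n). f1 d) = (\<Sum>d\<in>Q - Dset (real n). f1 d)"
    by simp
  hence "norm ((\<Prod>i\<le>n. euler_factor \<theta> i) - (\<Sum>d\<in>Dset (real n). f1 d)) \<le> (\<Sum>d\<in>Q - Dset (real n). norm (f1 d))"
    by (simp add: norm_sum)
  also have "\<dots> = (\<Sum>d\<in>Q - Dset (real n). b1 d)" by (simp add: f1_def b1_def norm_divide)
  also have "\<dots> = (\<Sum>d\<in>(Q - Dset (real n)) \<union> {..n}. b1 d) - (\<Sum>i\<le>n. b1 i)"
  proof -
    have "(Q - Dset (real n)) \<inter> {..n} = {}"
    proof (intro equalityI subsetI)
      fix d assume d: "d \<in> (Q - Dset (real n)) \<inter> {..n}"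
      hence "d > 0" using Q_pos[of d "real n"] unfolding Q_def by blast
      with d show "d \<in> {}" by (auto simp: Dset_def)
    qed auto
    thus ?thesis using fQ by (simp add: sum.union_disjoint)
  qed
  also have "\<dots> \<le> suminf b1 - (\<Sum>i\<le>n. b1 i)"
    using fQ by (intro diff_right_mono sum_le_suminf summable_b1) (auto simp: b1_nonneg)
  finally show ?thesis by (simp add: Q_def)
qed

lemma Dset_nat: "Dset (real n) = {1..n}"
  by (auto simp: Dset_def)

lemma euler_eq: "singular_series \<theta> = suminf f1"
proof -
  have lim1: "(\<lambda>n. \<Prod>i\<le>n. euler_factor \<theta> i) \<longlonglongrightarrow> singular_series \<theta>"
    unfolding singular_series_def
    by (rule convergent_prod_LIMSEQ[OF abs_convergent_prod_imp_convergent_prod[OF euler_abs]])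
  have lim2: "(\<lambda>n. \<Sum>d\<in>Dset (real n). f1 d) \<longlonglongrightarrow> suminf f1"
  proof -
    have "(\<lambda>n. \<Sum>i\<le>n. f1 i) \<longlonglongrightarrow> suminf f1" by (rule summable_LIMSEQ'[OF summable_f1])
    moreover have "(\<Sum>i\<le>n. f1 i) = (\<Sum>d\<in>Dset (real n). f1 d)" for n
      unfolding Dset_nat by (intro sum.mono_neutral_right) (auto simp: f1_def)
    ultimately show ?thesis by simp
  qed
  have lim3: "(\<lambda>n. suminf b1 - (\<Sum>i\<le>n. b1 i)) \<longlonglongrightarrow> 0"
    using tendsto_diff[OF tendsto_const summable_LIMSEQ'[OF summable_b1], of "suminf b1"] by simp
  have z: "(\<lambda>n. (\<Prod>i\<le>n. euler_factor \<theta> i) - (\<Sum>d\<in>Dset (real n). f1 d)) \<longlonglongrightarrow> 0"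
    by (rule tendsto_norm_zero_cancel, rule Lim_null_comparison[OF _ lim3])
       (auto intro!: always_eventually euler_diff)
  have "(\<lambda>n. (\<Prod>i\<le>n. euler_factor \<theta> i)) \<longlonglongrightarrow> suminf f1"
    using tendsto_add[OF z lim2] by simp
  thus ?thesis using lim1 LIMSEQ_unique by blast
qed

end


definition Tb :: "real \<Rightarrow> real \<Rightarrow> real" where "Tb \<beta> y = (\<Sum>m\<in>Dset y. real m powr \<beta>)"

lemma M_deriv: "t > 0 \<Longrightarrow> DERIV (M_beta \<beta>) t :> t powr \<beta>"
proof (cases "\<beta> = -1")
  case True
  assume t: "t > 0"
  have "M_beta \<beta> = ln" using True by (auto simp: M_beta_def)
  thus ?thesis using DERIV_ln[OF t] t True by (simp add: powr_minus)
next
  case False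
  assume t: "t > 0"
  have e: "M_beta \<beta> = (\<lambda>x. x powr (\<beta>+1) / (\<beta>+1))" using False by (auto simp: M_beta_def)
  have "DERIV (\<lambda>x. x powr (\<beta>+1) / (\<beta>+1)) t :> (\<beta>+1) * t powr (\<beta> + 1 - 1) / (\<beta>+1)"
    by (intro DERIV_cdivide has_real_derivative_powr t)
  moreover have "\<beta> + 1 \<noteq> 0" using False by linarith
  ultimately show ?thesis unfolding e by simp
qed

lemma M_mvt:
  assumes "1 \<le> a" "a \<le> b"
  shows "\<exists>\<xi>. a \<le> \<xi> \<and> \<xi> \<le> b \<and> M_beta \<beta> b - M_beta \<beta> a = (b - a) * \<xi> powr \<beta>"
proof (cases "a = b")
  case True thus ?thesis by auto
next
  case False
  hence "a < b" using assms by simp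
  from MVT2[OF this, of "M_beta \<beta>" "\<lambda>t. t powr \<beta>"] assms
  obtain z where "a < z" "z < b" "M_beta \<beta> b - M_beta \<beta> a = (b - a) * z powr \<beta>"
    using M_deriv by fastforce
  thus ?thesis by (intro exI[of _ z]) auto
qed

lemma Dset_Suc: "Dset (real (Suc n)) = insert (Suc n) (Dset (real n))"
  by (auto simp: Dset_def)

lemma Tb_Suc: "Tb \<beta> (real (Suc n)) = Tb \<beta> (real n) + real (Suc n) powr \<beta>"
proof -
  have "Suc n \<notin> Dset (real n)" by (auto simp: Dset_def)
  thus ?thesis unfolding Tb_def Dset_Suc by (simp add: add.commute)
qed

lemma Dset_floor: "y \<ge> 0 \<Longrightarrow> Dset y = Dset (real (nat \<lfloor>y\<rfloor>))"
proof -
  assume y: "y \<ge> 0"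
  have "real x \<le> y \<longleftrightarrow> x \<le> nat \<lfloor>y\<rfloor>" for x :: nat
  proof -
    have "x \<le> nat \<lfloor>y\<rfloor> \<longleftrightarrow> int x \<le> \<lfloor>y\<rfloor>" using y by (simp add: le_nat_iff)
    also have "\<dots> \<longleftrightarrow> real_of_int (int x) \<le> y" by (rule le_floor_iff)
    finally show ?thesis by simp
  qed
  thus ?thesis by (auto simp: Dset_def)
qed

lemma T_asymp: "\<exists>c K. K \<ge> 0 \<and> (\<forall>y\<ge>1. \<bar>Tb \<beta> y - M_beta \<beta> y - c\<bar> \<le> K * y powr \<beta>)"
proof -
  define D where "D n = Tb \<beta> (real n) - M_beta \<beta> (real n)" for n
  define E where "E k = D (Suc k)" for k
  have incr: "\<exists>\<xi>. real n \<le> \<xi> \<and> \<xi> \<le> real (Suc n) \<and> D (Suc n) - D n = real (Suc n) powr \<beta> - \<xi> powr \<beta>"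
    if "n \<ge> 1" for n
  proof -
    have "1 \<le> real n" "real n \<le> real (Suc n)" using that by auto
    from M_mvt[OF this, of \<beta>] obtain \<xi> where "real n \<le> \<xi>" "\<xi> \<le> real (Suc n)" "M_beta \<beta> (real (Suc n)) - M_beta \<beta> (real n) = (real (Suc n) - real n) * \<xi> powr \<beta>"
      by blast
    thus ?thesis by (intro exI[of _ \<xi>]) (use Tb_Suc[of \<beta> n] in \<open>auto simp: D_def\<close>)
  qed
  have Nb: "real N \<ge> y / 2" "real N \<le> y" "y - real N < 1" "N \<ge> 1" if "y \<ge> 1" "N = nat \<lfloor>y\<rfloor>" for y N
  proof -
    have "real N = of_int \<lfloor>y\<rfloor>" using that by simp
    moreover have "of_int \<lfloor>y\<rfloor> \<le> y" "y < of_int \<lfloor>y\<rfloor> + 1" by linarith+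
    moreover have "\<lfloor>y\<rfloor> \<ge> 1" using that by simp
    ultimately show "real N \<ge> y / 2" "real N \<le> y" "y - real N < 1" "N \<ge> 1" using that by linarith+
  qed
  have key: "\<bar>Tb \<beta> y - M_beta \<beta> y - c\<bar> \<le> \<bar>D (nat \<lfloor>y\<rfloor>) - c\<bar> + (y - real (nat \<lfloor>y\<rfloor>)) * \<xi> powr \<beta>"
    if "y \<ge> 1" "M_beta \<beta> y - M_beta \<beta> (real (nat \<lfloor>y\<rfloor>)) = (y - real (nat \<lfloor>y\<rfloor>)) * \<xi> powr \<beta>" for y c \<xi>
  proof -
    have "Tb \<beta> y = Tb \<beta> (real (nat \<lfloor>y\<rfloor>))" unfolding Tb_def using that Dset_floor[of y] by simp
    moreover have "0 \<le> (y - real (nat \<lfloor>y\<rfloor>)) * \<xi> powr \<beta>" using Nb[OF that(1) refl] by simp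
    ultimately show ?thesis using that unfolding D_def by (smt (verit))
  qed
  show ?thesis
  proof (cases "\<beta> < 0")
    case True
    have inc2: "real (Suc n) powr \<beta> - real n powr \<beta> \<le> D (Suc n) - D n \<and> D (Suc n) - D n \<le> 0" if n1: "n \<ge> 1" for n
    proof -
      obtain \<xi> where \<xi>: "real n \<le> \<xi>" "\<xi> \<le> real (Suc n)" "D (Suc n) - D n = real (Suc n) powr \<beta> - \<xi> powr \<beta>"
        using incr[OF n1] by auto
      have "\<xi> powr \<beta> \<le> real n powr \<beta>" using \<xi> that True by (intro powr_mono2') auto
      moreover have "real (Suc n) powr \<beta> \<le> \<xi> powr \<beta>" using \<xi> that True by (intro powr_mono2') auto
      ultimately show ?thesis using \<xi> by linarith
    qed
    have dec: "decseq E" unfolding decseq_Suc_iff E_def using inc2 by force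
    have tele: "E (i + m) \<ge> E i + real (i + m + 1) powr \<beta> - real (i + 1) powr \<beta>" for i m
    proof (induction m)
      case 0 then show ?case by simp
    next
      case (Suc m)
      have "real (Suc (Suc (i + m))) powr \<beta> - real (Suc (i + m)) powr \<beta> \<le> D (Suc (Suc (i + m))) - D (Suc (i + m))"
        using inc2[of "Suc (i+m)"] by simp
      with Suc show ?case by (simp add: E_def algebra_simps)
    qed
    have lb: "E 0 - 1 \<le> E k" for k
      using tele[of 0 k] by (simp add: powr_ge_zero) (smt (verit) powr_ge_zero)
    obtain c where c: "E \<longlonglongrightarrow> c" "\<forall>i. c \<le> E i" using decseq_convergent[OF dec] lb by blast
    have ub: "E i - c \<le> real (i + 1) powr \<beta>" for i
    proof -
      have "E i - real (i + 1) powr \<beta> \<le> c"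
      proof (rule LIMSEQ_le_const[OF c(1)], intro exI[of _ i] allI impI)
        fix m assume "m \<ge> i"
        then obtain k where "m = i + k" by (metis le_Suc_ex)
        thus "E i - real (i + 1) powr \<beta> \<le> E m" using tele[of i k] by (smt (verit) powr_ge_zero)
      qed
      thus ?thesis by simp
    qed
    have Dc: "\<bar>D n - c\<bar> \<le> real n powr \<beta>" if n1: "n \<ge> 1" for n
    proof -
      obtain k where "n = Suc k" using n1 by (cases n) auto
      thus ?thesis using ub[of k] c(2) by (auto simp: E_def)
    qed
    have main: "\<bar>Tb \<beta> y - M_beta \<beta> y - c\<bar> \<le> 2 * 2 powr (-\<beta>) * y powr \<beta>" if y: "y \<ge> 1" for y
    proof -
      define N where "N = nat \<lfloor>y\<rfloor>"
      note N = Nb[OF y N_def]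
      obtain \<xi> where \<xi>: "real N \<le> \<xi>" "\<xi> \<le> y" "M_beta \<beta> y - M_beta \<beta> (real N) = (y - real N) * \<xi> powr \<beta>"
        using M_mvt[of "real N" y \<beta>] N by auto
      have Npow: "real N powr \<beta> \<le> 2 powr (-\<beta>) * y powr \<beta>"
      proof -
        have "real N powr \<beta> \<le> (y/2) powr \<beta>" using N(1) True y by (intro powr_mono2') auto
        also have "\<dots> = y powr \<beta> / 2 powr \<beta>" using y by (intro powr_divide)
        also have "\<dots> = 2 powr (-\<beta>) * y powr \<beta>" by (simp add: powr_minus field_simps)
        finally show ?thesis .
      qed
      have "\<xi> powr \<beta> \<le> real N powr \<beta>" using \<xi> N True by (intro powr_mono2') auto
      moreover have "(y - real N) * \<xi> powr \<beta> \<le> \<xi> powr \<beta>" using N by (intro mult_left_le_one_le) auto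
      ultimately have "\<bar>Tb \<beta> y - M_beta \<beta> y - c\<bar> \<le> real N powr \<beta> + real N powr \<beta>"
        using key[OF y \<xi>(3)[unfolded N_def], of c] Dc[OF N(4)] unfolding N_def by linarith
      also have "\<dots> \<le> 2 * 2 powr (-\<beta>) * y powr \<beta>" using Npow by linarith
      finally show ?thesis .
    qed
    show ?thesis by (intro exI[of _ c] exI[of _ "2 * 2 powr (-\<beta>)"]) (use main in auto)
  next
    case False
    have inc2: "0 \<le> D (Suc n) - D n \<and> D (Suc n) - D n \<le> real (Suc n) powr \<beta> - real n powr \<beta>" if n1: "n \<ge> 1" for n
    proof -
      obtain \<xi> where \<xi>: "real n \<le> \<xi>" "\<xi> \<le> real (Suc n)" "D (Suc n) - D n = real (Suc n) powr \<beta> - \<xi> powr \<beta>"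
        using incr[OF n1] by auto
      have "\<xi> powr \<beta> \<ge> real n powr \<beta>" using \<xi> that False by (intro powr_mono2) auto
      moreover have "real (Suc n) powr \<beta> \<ge> \<xi> powr \<beta>" using \<xi> that False by (intro powr_mono2) auto
      ultimately show ?thesis using \<xi> by linarith
    qed
    have tele: "E 0 \<le> E m \<and> E m \<le> E 0 + real (m + 1) powr \<beta> - 1" for m
    proof (induction m)
      case 0 then show ?case by simp
    next
      case (Suc m)
      have "0 \<le> D (Suc (Suc m)) - D (Suc m) \<and> D (Suc (Suc m)) - D (Suc m) \<le> real (Suc (Suc m)) powr \<beta> - real (Suc m) powr \<beta>"
        using inc2[of "Suc m"] by simp
      with Suc show ?case by (simp add: E_def algebra_simps)
    qed
    define K0 where "K0 = \<bar>E 0\<bar> + 1"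
    have Dn: "\<bar>D n\<bar> \<le> K0 * real n powr \<beta>" if n1: "n \<ge> 1" for n
    proof -
      obtain k where k: "n = Suc k" using n1 by (cases n) auto
      have ge1: "1 \<le> real n powr \<beta>" using n1 False by (intro ge_one_powr_ge_zero) auto
      have "\<bar>D n\<bar> \<le> \<bar>E 0\<bar> + real n powr \<beta>" using tele[of k] k by (auto simp: E_def)
      also have "\<dots> \<le> \<bar>E 0\<bar> * real n powr \<beta> + real n powr \<beta>" using ge1
        by (intro add_right_mono) (simp add: mult_le_cancel_left1)
      finally show ?thesis by (simp add: K0_def algebra_simps)
    qed
    have main: "\<bar>Tb \<beta> y - M_beta \<beta> y - 0\<bar> \<le> (K0 + 1) * y powr \<beta>" if y: "y \<ge> 1" for y
    proof -
      define N where "N = nat \<lfloor>y\<rfloor>"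
      note N = Nb[OF y N_def]
      obtain \<xi> where \<xi>: "real N \<le> \<xi>" "\<xi> \<le> y" "M_beta \<beta> y - M_beta \<beta> (real N) = (y - real N) * \<xi> powr \<beta>"
        using M_mvt[of "real N" y \<beta>] N by auto
      have "real N powr \<beta> \<le> y powr \<beta>" using N False by (intro powr_mono2) auto
      moreover have "\<xi> powr \<beta> \<le> y powr \<beta>" using \<xi> N False by (intro powr_mono2) auto
      moreover have "(y - real N) * \<xi> powr \<beta> \<le> \<xi> powr \<beta>" using N by (intro mult_left_le_one_le) auto
      moreover have "K0 \<ge> 0" by (simp add: K0_def)
      ultimately have "K0 * real N powr \<beta> + (y - real N) * \<xi> powr \<beta> \<le> K0 * y powr \<beta> + y powr \<beta>"
        by (smt (verit) mult_left_mono)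
      moreover have "\<bar>Tb \<beta> y - M_beta \<beta> y - 0\<bar> \<le> \<bar>D N - 0\<bar> + (y - real N) * \<xi> powr \<beta>"
        using key[OF y \<xi>(3)[unfolded N_def]] unfolding N_def .
      ultimately show ?thesis
        using Dn[OF N(4)] by (simp add: algebra_simps)
    qed
    have "K0 + 1 \<ge> 0" by (simp add: K0_def)
    thus ?thesis by (intro exI[of _ 0] exI[of _ "K0 + 1"]) (use main in auto)
  qed
qed



lemma nat_le_floor_iff: "x \<ge> 0 \<Longrightarrow> (k \<le> nat \<lfloor>x\<rfloor> \<longleftrightarrow> real k \<le> x)"
proof -
  assume y: "x \<ge> 0"
  have "k \<le> nat \<lfloor>x\<rfloor> \<longleftrightarrow> int k \<le> \<lfloor>x\<rfloor>" using y by (simp add: le_nat_iff)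
  also have "\<dots> \<longleftrightarrow> real_of_int (int k) \<le> x" by (rule le_floor_iff)
  finally show ?thesis by simp
qed

lemma Dset_div_iff:
  assumes "d > 0" "x \<ge> 0"
  shows "m \<in> Dset (x / real d) \<longleftrightarrow> 0 < m \<and> d * m \<le> nat \<lfloor>x\<rfloor>"
proof -
  have "real m \<le> x / real d \<longleftrightarrow> real (d * m) \<le> x" using assms by (simp add: field_simps)
  thus ?thesis using nat_le_floor_iff[OF assms(2)] by (auto simp: Dset_def)
qed

lemma swap:
  fixes g :: "nat \<Rightarrow> complex"
  assumes x: "x \<ge> 0"
  shows "(\<Sum>n=1..nat \<lfloor>x\<rfloor>. of_real (real n powr \<beta>) * (\<Sum>d | d dvd n. g d))
       = (\<Sum>d\<in>Dset x. g d * of_real (real d powr \<beta>) * of_real (Tb \<beta> (x / real d)))"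
proof -
  define N where "N = nat \<lfloor>x\<rfloor>"
  define T where "T = Sigma {1..N} (\<lambda>n. {d. d dvd n})"
  define S where "S = Sigma (Dset x) (\<lambda>d. Dset (x / real d))"
  have "(\<Sum>n=1..N. of_real (real n powr \<beta>) * (\<Sum>d | d dvd n. g d))
      = (\<Sum>n=1..N. \<Sum>d | d dvd n. g d * of_real (real n powr \<beta>))"
    by (simp add: sum_distrib_left mult.commute)
  also have "\<dots> = (\<Sum>(n,d)\<in>T. g d * of_real (real n powr \<beta>))"
    unfolding T_def by (rule sum.Sigma) auto
  also have "\<dots> = (\<Sum>(d,m)\<in>S. g d * of_real (real d powr \<beta> * real m powr \<beta>))"
  proof -
    have memS: "(d,m) \<in> S \<longleftrightarrow> 0 < d \<and> 0 < m \<and> d * m \<le> N" for d m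
    proof
      assume "(d,m) \<in> S"
      hence d: "d \<in> Dset x" "m \<in> Dset (x / real d)" by (auto simp: S_def)
      have dp: "d > 0" using d by (auto simp: Dset_def)
      thus "0 < d \<and> 0 < m \<and> d * m \<le> N" using d(2) Dset_div_iff[OF dp x] by (auto simp: N_def)
    next
      assume a: "0 < d \<and> 0 < m \<and> d * m \<le> N"
      hence "d * 1 \<le> d * m" by (intro mult_le_mono2) auto
      hence "d \<le> N" using a by linarith
      hence "real d \<le> x" using nat_le_floor_iff[OF x] by (simp add: N_def)
      thus "(d,m) \<in> S" using a Dset_div_iff[of d x m] x by (auto simp: S_def Dset_def N_def)
    qed
    have memT: "(n,d) \<in> T \<longleftrightarrow> 1 \<le> n \<and> n \<le> N \<and> d dvd n" for n d
      by (auto simp: T_def)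
    show ?thesis
      apply (rule sum.reindex_bij_witness[where j="\<lambda>(n,d). (d, n div d)" and i="\<lambda>(d,m). (d*m, d)"])
      subgoal for b
      proof (cases b)
        case (Pair n d)
        assume "b \<in> T"
        hence n: "d dvd n" using Pair by (auto simp: memT)
        thus ?thesis using Pair by simp
      qed
      subgoal for b
      proof (cases b)
        case (Pair n d)
        assume "b \<in> T"
        hence n: "1 \<le> n" "n \<le> N" "d dvd n" using Pair by (auto simp: memT)
        have dp: "d > 0" using n by (metis dvd_0_left_iff gr0I not_one_le_zero)
        have e: "d * (n div d) = n" using n by simp
        have "n div d > 0" using e n by (metis gr0I mult_0_right not_one_le_zero)
        thus ?thesis using Pair dp e n by (simp add: memS)
      qed
      subgoal for a by (cases a) (auto simp: memS)
      subgoal for a by (cases a) (auto simp: memS memT)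
      subgoal for b
      proof (cases b)
        case (Pair n d)
        assume "b \<in> T"
        hence n: "d dvd n" using Pair by (auto simp: memT)
        hence e: "real n = real d * real (n div d)" by (metis dvd_mult_div_cancel of_nat_mult)
        thus ?thesis using Pair by (simp add: powr_mult)
      qed
      done
  qed
  also have "\<dots> = (\<Sum>d\<in>Dset x. \<Sum>m\<in>Dset (x / real d). g d * of_real (real d powr \<beta> * real m powr \<beta>))"
    unfolding S_def by (rule sum.Sigma[symmetric]) auto
  also have "\<dots> = (\<Sum>d\<in>Dset x. g d * of_real (real d powr \<beta>) * of_real (Tb \<beta> (x / real d)))"
    by (simp add: Tb_def sum_distrib_left mult.assoc)
  finally show ?thesis by (simp add: N_def)
qed



definition G1 :: "real \<Rightarrow> real \<Rightarrow> real \<Rightarrow> real" where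
  "G1 \<sigma> \<kappa> \<beta> = (if \<beta> = -1 then Gc (\<sigma> - 1) (\<kappa> + 1) else Gc (\<sigma> - 1) \<kappa> / \<bar>\<beta> + 1\<bar>)"
definition G2 :: "real \<Rightarrow> real \<Rightarrow> real \<Rightarrow> real" where
  "G2 \<sigma> \<kappa> \<beta> = (if \<beta> + \<sigma> < 0 then Gc (\<beta> + \<sigma>) \<kappa> else 1)"

context thctx begin

lemma S0_bound: "x \<ge> 1 \<Longrightarrow> (\<Sum>d\<in>Dset x. norm (\<theta> d) * real d powr (-\<sigma>)) \<le> exp A * (ln x + 1) powr \<kappa>"
  by (rule rankin)

lemma shift_bound:
  assumes x: "x \<ge> 1" and g: "\<gamma> + \<sigma> \<ge> 0"
  shows "(\<Sum>d\<in>Dset x. norm (\<theta> d) * real d powr \<gamma>) \<le> x powr (\<gamma> + \<sigma>) * (exp A * (ln x + 1) powr \<kappa>)"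
proof -
  have "(\<Sum>d\<in>Dset x. norm (\<theta> d) * real d powr \<gamma>) \<le> (\<Sum>d\<in>Dset x. x powr (\<gamma> + \<sigma>) * (norm (\<theta> d) * real d powr (-\<sigma>)))"
  proof (intro sum_mono)
    fix d assume d: "d \<in> Dset x"
    hence dp: "real d > 0" "real d \<le> x" by (auto simp: Dset_def)
    have "real d powr \<gamma> = real d powr (\<gamma> + \<sigma>) * real d powr (-\<sigma>)" by (simp add: powr_add[symmetric])
    also have "\<dots> \<le> x powr (\<gamma> + \<sigma>) * real d powr (-\<sigma>)" using dp g by (intro mult_right_mono powr_mono2) auto
    finally show "norm (\<theta> d) * real d powr \<gamma> \<le> x powr (\<gamma> + \<sigma>) * (norm (\<theta> d) * real d powr (-\<sigma>))"
      by (simp add: mult_left_mono mult.left_commute)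
  qed
  also have "\<dots> = x powr (\<gamma> + \<sigma>) * (\<Sum>d\<in>Dset x. norm (\<theta> d) * real d powr (-\<sigma>))" by (simp add: sum_distrib_left)
  also have "\<dots> \<le> x powr (\<gamma> + \<sigma>) * (exp A * (ln x + 1) powr \<kappa>)" by (intro mult_left_mono rankin x) auto
  finally show ?thesis .
qed

lemma partIII:
  assumes x: "x \<ge> 1" and K1: "K1 \<ge> 0" and R: "\<And>d. d \<in> Dset x \<Longrightarrow> \<bar>R d\<bar> \<le> K1 * (x / real d) powr \<beta>"
  shows "norm (\<Sum>d\<in>Dset x. \<theta> d * of_real (real d powr \<beta> * R d)) \<le> K1 * exp A * x powr (\<sigma> + \<beta>) * (ln x + 1) powr \<kappa>"
proof -
  have "norm (\<Sum>d\<in>Dset x. \<theta> d * of_real (real d powr \<beta> * R d)) \<le> (\<Sum>d\<in>Dset x. norm (\<theta> d * of_real (real d powr \<beta> * R d)))"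
    by (rule norm_sum)
  also have "\<dots> \<le> (\<Sum>d\<in>Dset x. K1 * x powr \<beta> * (norm (\<theta> d) * real d powr 0))"
  proof (intro sum_mono)
    fix d assume d: "d \<in> Dset x"
    hence dp: "real d > 0" by (auto simp: Dset_def)
    have "norm (\<theta> d * of_real (real d powr \<beta> * R d)) = norm (\<theta> d) * (real d powr \<beta> * \<bar>R d\<bar>)"
      by (simp add: norm_mult abs_mult)
    also have "\<dots> \<le> norm (\<theta> d) * (real d powr \<beta> * (K1 * (x / real d) powr \<beta>))"
      using R[OF d] by (intro mult_left_mono) auto
    also have "real d powr \<beta> * (K1 * (x / real d) powr \<beta>) = K1 * x powr \<beta>"
      using dp x by (simp add: powr_divide)
    finally show "norm (\<theta> d * of_real (real d powr \<beta> * R d)) \<le> K1 * x powr \<beta> * (norm (\<theta> d) * real d powr 0)"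
      using dp by (simp add: mult_ac)
  qed
  also have "\<dots> = K1 * x powr \<beta> * (\<Sum>d\<in>Dset x. norm (\<theta> d) * real d powr 0)" by (simp add: sum_distrib_left)
  also have "\<dots> \<le> K1 * x powr \<beta> * (x powr (0 + \<sigma>) * (exp A * (ln x + 1) powr \<kappa>))"
    using K1 sig0 by (intro mult_left_mono shift_bound x) auto
  also have "\<dots> = K1 * exp A * x powr (\<sigma> + \<beta>) * (ln x + 1) powr \<kappa>"
    by (simp add: powr_add mult_ac)
  finally show ?thesis .
qed

definition f2 :: "real \<Rightarrow> nat \<Rightarrow> complex" where "f2 \<beta> d = \<theta> d * of_real (real d powr \<beta>)"

lemma partII:
  "\<exists>C2. \<forall>x\<ge>2. norm (of_real c * (\<Sum>d\<in>Dset x. f2 \<beta> d) - C2) \<le> \<bar>c\<bar> * exp A * G2 \<sigma> \<kappa> \<beta> * x powr (\<sigma> + \<beta>) * (ln x + 1) powr \<kappa>"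
proof (cases "\<beta> + \<sigma> < 0")
  case False
  show ?thesis
  proof (intro exI[of _ 0] allI impI)
    fix x :: real assume x: "x \<ge> 2"
    have "norm (\<Sum>d\<in>Dset x. f2 \<beta> d) \<le> (\<Sum>d\<in>Dset x. norm (\<theta> d) * real d powr \<beta>)"
      by (rule order_trans[OF norm_sum]) (simp add: f2_def norm_mult)
    also have "\<dots> \<le> x powr (\<beta> + \<sigma>) * (exp A * (ln x + 1) powr \<kappa>)"
      using False x by (intro shift_bound) auto
    finally have "norm (of_real c * (\<Sum>d\<in>Dset x. f2 \<beta> d)) \<le> \<bar>c\<bar> * (x powr (\<beta> + \<sigma>) * (exp A * (ln x + 1) powr \<kappa>))"
      by (simp add: norm_mult mult_left_mono)
    thus "norm (of_real c * (\<Sum>d\<in>Dset x. f2 \<beta> d) - 0) \<le> \<bar>c\<bar> * exp A * G2 \<sigma> \<kappa> \<beta> * x powr (\<sigma> + \<beta>) * (ln x + 1) powr \<kappa>"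
      using False by (simp add: G2_def mult_ac add.commute)
  qed
next
  case True
  show ?thesis
  proof (intro exI[of _ "of_real c * suminf (f2 \<beta>)"] allI impI)
    fix x :: real assume x: "x \<ge> 2"
    have fb: "norm (f2 \<beta> d) \<le> Fw (\<beta> + \<sigma>) 0 x d" if "x < real d" for d
      using that by (simp add: f2_def Fw_def norm_mult)
    note tl = tail_Fw[of x "\<beta> + \<sigma>" "f2 \<beta>" 0, OF _ True fb]
    have eq: "suminf (f2 \<beta>) = (\<Sum>d\<in>Dset x. f2 \<beta> d) + suminf (tlx x (f2 \<beta>))"
      using split_tail(2)[OF tl(1)] x by (simp add: f2_def th0)
    have "norm (of_real c * (\<Sum>d\<in>Dset x. f2 \<beta> d) - of_real c * suminf (f2 \<beta>)) = \<bar>c\<bar> * norm (suminf (tlx x (f2 \<beta>)))"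
      unfolding eq by (simp add: algebra_simps norm_mult norm_minus_commute)
    also have "\<dots> \<le> \<bar>c\<bar> * (exp A * x powr (\<beta> + \<sigma>) * (ln x + 1) powr \<kappa> * Gc (\<beta> + \<sigma>) (\<kappa> + real 0))"
      using tl(2) x by (intro mult_left_mono) auto
    finally show "norm (of_real c * (\<Sum>d\<in>Dset x. f2 \<beta> d) - of_real c * suminf (f2 \<beta>)) \<le> \<bar>c\<bar> * exp A * G2 \<sigma> \<kappa> \<beta> * x powr (\<sigma> + \<beta>) * (ln x + 1) powr \<kappa>"
      using True by (simp add: G2_def mult_ac add.commute)
  qed
qed

end


context thctx begin

definition f3 :: "nat \<Rightarrow> complex" where "f3 d = f1 d * of_real (ln (real d))"

lemma partI:
  "\<exists>C1. \<forall>x\<ge>2. norm ((\<Sum>d\<in>Dset x. \<theta> d * of_real (real d powr \<beta> * M_beta \<beta> (x / real d)))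
        - singular_series \<theta> * of_real (M_beta \<beta> x) - C1)
      \<le> exp A * G1 \<sigma> \<kappa> \<beta> * x powr (\<sigma> + \<beta>) * (ln x + 1) powr \<kappa>"
proof (cases "\<beta> = -1")
  case False
  show ?thesis
  proof (intro exI[of _ 0] allI impI)
    fix x :: real assume x: "x \<ge> 2"
    have b1: "\<beta> + 1 \<noteq> 0" using False by linarith
    have trm: "\<theta> d * of_real (real d powr \<beta> * M_beta \<beta> (x / real d)) = of_real (M_beta \<beta> x) * f1 d"
      if "d \<in> Dset x" for d
    proof -
      have dp: "real d > 0" using that by (auto simp: Dset_def)
      have "real d powr \<beta> * M_beta \<beta> (x / real d) = real d powr \<beta> * (x powr (\<beta>+1) / real d powr (\<beta>+1) / (\<beta>+1))"
        using False dp x by (simp add: M_beta_def powr_divide)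
      also have "\<dots> = M_beta \<beta> x / real d"
      proof -
        have e: "real d powr (\<beta>+1) = real d powr \<beta> * real d" using dp by (simp add: powr_add)
        have "real d powr \<beta> > 0" using dp by simp
        hence "real d powr \<beta> \<noteq> 0" by simp
        hence "\<And>X. real d powr \<beta> * (X / (real d powr \<beta> * real d) / (\<beta>+1)) = X / real d / (\<beta>+1)"
          by simp
        thus ?thesis unfolding e using False by (simp add: M_beta_def)
      qed
      finally show ?thesis by (simp add: f1_def field_simps)
    qed
    have x1: "x \<ge> 1" using x by simp
    note tl = tail1[OF x1]
    have eq: "suminf f1 = (\<Sum>d\<in>Dset x. f1 d) + suminf (tlx x f1)"
      using split_tail(2)[OF tl(1)] x by (simp add: f1_def th0)
    have "(\<Sum>d\<in>Dset x. \<theta> d * of_real (real d powr \<beta> * M_beta \<beta> (x / real d))) = of_real (M_beta \<beta> x) * (\<Sum>d\<in>Dset x. f1 d)"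
      by (simp only: sum_distrib_left) (rule sum.cong[OF refl trm])
    hence "norm ((\<Sum>d\<in>Dset x. \<theta> d * of_real (real d powr \<beta> * M_beta \<beta> (x / real d)))
        - singular_series \<theta> * of_real (M_beta \<beta> x) - 0) = \<bar>M_beta \<beta> x\<bar> * norm (suminf (tlx x f1))"
      unfolding euler_eq eq by (simp add: algebra_simps norm_mult norm_minus_commute)
    also have "\<dots> \<le> \<bar>M_beta \<beta> x\<bar> * (exp A * x powr (\<sigma> - 1) * (ln x + 1) powr \<kappa> * Gc (\<sigma> - 1) \<kappa>)"
      using tl(2) x by (intro mult_left_mono) auto
    also have "\<bar>M_beta \<beta> x\<bar> = x powr (\<beta> + 1) / \<bar>\<beta> + 1\<bar>" using False by (simp add: M_beta_def)
    also have "x powr (\<beta> + 1) / \<bar>\<beta> + 1\<bar> * (exp A * x powr (\<sigma> - 1) * (ln x + 1) powr \<kappa> * Gc (\<sigma> - 1) \<kappa>)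
        = exp A * (Gc (\<sigma> - 1) \<kappa> / \<bar>\<beta> + 1\<bar>) * (x powr (\<beta> + 1) * x powr (\<sigma> - 1)) * (ln x + 1) powr \<kappa>"
      by (simp add: field_simps)
    also have "x powr (\<beta> + 1) * x powr (\<sigma> - 1) = x powr (\<sigma> + \<beta>)" by (simp add: powr_add[symmetric] add.commute)
    finally show "norm ((\<Sum>d\<in>Dset x. \<theta> d * of_real (real d powr \<beta> * M_beta \<beta> (x / real d)))
        - singular_series \<theta> * of_real (M_beta \<beta> x) - 0) \<le> exp A * G1 \<sigma> \<kappa> \<beta> * x powr (\<sigma> + \<beta>) * (ln x + 1) powr \<kappa>"
      using False by (simp add: G1_def)
  qed
next
  case True
  show ?thesis
  proof (intro exI[of _ "- suminf f3"] allI impI)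
    fix x :: real assume x: "x \<ge> 2"
    define g where "g d = f1 d * of_real (ln (real d) - ln x)" for d
    have trm: "\<theta> d * of_real (real d powr \<beta> * M_beta \<beta> (x / real d)) = of_real (ln x) * f1 d - f3 d"
      if "d \<in> Dset x" for d
    proof -
      have dp: "real d > 0" using that by (auto simp: Dset_def)
      have r: "real d powr \<beta> * M_beta \<beta> (x / real d) = (ln x - ln (real d)) / real d"
        using True dp x by (simp add: M_beta_def ln_div powr_minus_divide)
      have "d \<noteq> 0" using dp by auto
      have "\<theta> d * of_real (real d powr \<beta> * M_beta \<beta> (x / real d)) = \<theta> d * of_real ((ln x - ln (real d)) / real d)"
        by (simp only: r)
      also have "\<dots> = of_real (ln x) * f1 d - f3 d" using \<open>d \<noteq> 0\<close>
        by (simp add: f1_def f3_def field_simps)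
      finally show ?thesis .
    qed
    have x1: "x \<ge> 1" using x by simp
    note tl = tail1[OF x1]
    have gb: "norm (g d) \<le> Fw (\<sigma> - 1) 1 x d" if "x < real d" for d
    proof -
      have dp: "real d > 0" using that x by auto
      have "ln (real d) - ln x = ln (real d / x)" using dp x by (simp add: ln_div)
      moreover have "0 \<le> ln (real d / x)" using that x by simp
      ultimately have "norm (g d) = norm (\<theta> d) / real d * ln (real d / x)"
        by (simp add: g_def f1_def norm_mult norm_divide)
      also have "\<dots> \<le> norm (\<theta> d) / real d * (1 + ln (real d / x))" by (intro mult_left_mono) auto
      also have "\<dots> = Fw (\<sigma> - 1) 1 x d" using dp by (simp add: Fw_def powr_minus divide_inverse)
      finally show ?thesis .
    qed
    note tg = tail_Fw[of x "\<sigma> - 1" g 1, OF _ _ gb]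
    have tgs: "summable (tlx x g)" using tg x sig1 by auto
    have tf3: "tlx x f3 = (\<lambda>d. of_real (ln x) * tlx x f1 d + tlx x g d)"
      by (auto simp: tlx_def g_def f3_def algebra_simps)
    have s3: "summable (tlx x f3)" unfolding tf3 by (intro summable_add summable_mult tl(1) tgs)
    have sum3: "suminf (tlx x f3) = of_real (ln x) * suminf (tlx x f1) + suminf (tlx x g)"
      unfolding tf3 by (simp add: suminf_add[symmetric] suminf_mult tl(1) tgs summable_mult)
    have eq1: "suminf f1 = (\<Sum>d\<in>Dset x. f1 d) + suminf (tlx x f1)"
      using split_tail(2)[OF tl(1)] x by (simp add: f1_def th0)
    have eq3: "suminf f3 = (\<Sum>d\<in>Dset x. f3 d) + suminf (tlx x f3)"
      using split_tail(2)[OF s3] x by (simp add: f3_def f1_def th0)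
    have Eq: "(\<Sum>d\<in>Dset x. \<theta> d * of_real (real d powr \<beta> * M_beta \<beta> (x / real d)))
        - singular_series \<theta> * of_real (M_beta \<beta> x) - (- suminf f3) = suminf (tlx x g)"
    proof -
      have "(\<Sum>d\<in>Dset x. \<theta> d * of_real (real d powr \<beta> * M_beta \<beta> (x / real d))) = (\<Sum>d\<in>Dset x. of_real (ln x) * f1 d - f3 d)"
        by (rule sum.cong[OF refl trm])
      also have "\<dots> = of_real (ln x) * (\<Sum>d\<in>Dset x. f1 d) - (\<Sum>d\<in>Dset x. f3 d)"
        by (simp add: sum_subtractf sum_distrib_left)
      finally have A: "(\<Sum>d\<in>Dset x. \<theta> d * of_real (real d powr \<beta> * M_beta \<beta> (x / real d))) = of_real (ln x) * (\<Sum>d\<in>Dset x. f1 d) - (\<Sum>d\<in>Dset x. f3 d)" .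
      have B: "(\<Sum>d\<in>Dset x. f1 d) = suminf f1 - suminf (tlx x f1)" using eq1 by simp
      have C: "(\<Sum>d\<in>Dset x. f3 d) = suminf f3 - (of_real (ln x) * suminf (tlx x f1) + suminf (tlx x g))"
        using eq3 sum3 by simp
      have D: "M_beta \<beta> x = ln x" using True by (simp add: M_beta_def)
      show ?thesis unfolding A B C D euler_eq by (simp add: algebra_simps)
    qed
    have nb: "norm (suminf (tlx x g)) \<le> exp A * x powr (\<sigma> - 1) * (ln x + 1) powr \<kappa> * Gc (\<sigma> - 1) (\<kappa> + real 1)"
      using tg x sig1 by auto
    have sb: "\<sigma> + \<beta> = \<sigma> - 1" using True by simp
    show "norm ((\<Sum>d\<in>Dset x. \<theta> d * of_real (real d powr \<beta> * M_beta \<beta> (x / real d)))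
        - singular_series \<theta> * of_real (M_beta \<beta> x) - (- suminf f3)) \<le> exp A * G1 \<sigma> \<kappa> \<beta> * x powr (\<sigma> + \<beta>) * (ln x + 1) powr \<kappa>"
      unfolding Eq sb using nb True by (simp add: G1_def mult_ac)
  qed
qed

end


context thctx begin

lemma main_est:
  assumes K1: "K1 \<ge> 0" "\<forall>y\<ge>1. \<bar>Tb \<beta> y - M_beta \<beta> y - c\<bar> \<le> K1 * y powr \<beta>"
  shows "\<exists>C. \<forall>x\<ge>2. norm ((\<Sum>n=1..nat \<lfloor>x\<rfloor>. of_real (real n powr \<beta>) * phi_theta \<theta> n)
      - singular_series \<theta> * of_real (M_beta \<beta> x) - C)
    \<le> exp A * (G1 \<sigma> \<kappa> \<beta> + \<bar>c\<bar> * G2 \<sigma> \<kappa> \<beta> + K1) * x powr (\<sigma> + \<beta>) * (ln x + 1) powr \<kappa>"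
proof -
  obtain C1 where C1: "\<forall>x\<ge>2. norm ((\<Sum>d\<in>Dset x. \<theta> d * of_real (real d powr \<beta> * M_beta \<beta> (x / real d)))
        - singular_series \<theta> * of_real (M_beta \<beta> x) - C1)
      \<le> exp A * G1 \<sigma> \<kappa> \<beta> * x powr (\<sigma> + \<beta>) * (ln x + 1) powr \<kappa>"
    using partI[of \<beta>] by blast
  obtain C2 where C2: "\<forall>x\<ge>2. norm (of_real c * (\<Sum>d\<in>Dset x. f2 \<beta> d) - C2) \<le> \<bar>c\<bar> * exp A * G2 \<sigma> \<kappa> \<beta> * x powr (\<sigma> + \<beta>) * (ln x + 1) powr \<kappa>"
    using partII[of c \<beta>] by blast
  show ?thesis
  proof (intro exI[of _ "C1 + C2"] allI impI)
    fix x :: real assume x: "x \<ge> 2"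
    define R where "R d = Tb \<beta> (x / real d) - M_beta \<beta> (x / real d) - c" for d
    define P1 where "P1 = (\<Sum>d\<in>Dset x. \<theta> d * of_real (real d powr \<beta> * M_beta \<beta> (x / real d)))"
    define P2 where "P2 = (\<Sum>d\<in>Dset x. f2 \<beta> d)"
    define P3 where "P3 = (\<Sum>d\<in>Dset x. \<theta> d * of_real (real d powr \<beta> * R d))"
    have "(\<Sum>n=1..nat \<lfloor>x\<rfloor>. of_real (real n powr \<beta>) * phi_theta \<theta> n)
        = (\<Sum>d\<in>Dset x. \<theta> d * of_real (real d powr \<beta>) * of_real (Tb \<beta> (x / real d)))"
      unfolding phi_theta_def using x by (intro swap) auto
    also have "\<dots> = (\<Sum>d\<in>Dset x. \<theta> d * of_real (real d powr \<beta> * M_beta \<beta> (x / real d)) + of_real c * f2 \<beta> d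
                      + \<theta> d * of_real (real d powr \<beta> * R d))"
    proof (intro sum.cong refl)
      fix d assume d: "d \<in> Dset x"
      have "Tb \<beta> (x / real d) = M_beta \<beta> (x / real d) + c + R d" by (simp add: R_def)
      thus "\<theta> d * of_real (real d powr \<beta>) * of_real (Tb \<beta> (x / real d))
          = \<theta> d * of_real (real d powr \<beta> * M_beta \<beta> (x / real d)) + of_real c * f2 \<beta> d + \<theta> d * of_real (real d powr \<beta> * R d)"
        by (simp add: f2_def algebra_simps)
    qed
    also have "\<dots> = P1 + of_real c * P2 + P3"
      by (simp add: P1_def P2_def P3_def sum.distrib sum_distrib_left)
    finally have L: "(\<Sum>n=1..nat \<lfloor>x\<rfloor>. of_real (real n powr \<beta>) * phi_theta \<theta> n) = P1 + of_real c * P2 + P3" .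
    have Rb: "\<bar>R d\<bar> \<le> K1 * (x / real d) powr \<beta>" if "d \<in> Dset x" for d
    proof -
      have "x / real d \<ge> 1" using that by (auto simp: Dset_def field_simps)
      thus ?thesis using K1(2) by (simp add: R_def)
    qed
    have b3: "norm P3 \<le> K1 * exp A * x powr (\<sigma> + \<beta>) * (ln x + 1) powr \<kappa>"
      unfolding P3_def using x K1(1) Rb by (intro partIII) auto
    have b1: "norm (P1 - singular_series \<theta> * of_real (M_beta \<beta> x) - C1) \<le> exp A * G1 \<sigma> \<kappa> \<beta> * x powr (\<sigma> + \<beta>) * (ln x + 1) powr \<kappa>"
      using C1 x unfolding P1_def by blast
    have b2: "norm (of_real c * P2 - C2) \<le> \<bar>c\<bar> * exp A * G2 \<sigma> \<kappa> \<beta> * x powr (\<sigma> + \<beta>) * (ln x + 1) powr \<kappa>"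
      using C2 x unfolding P2_def by blast
    have tri: "norm (a + b + e) \<le> norm a + norm b + norm e" for a b e :: complex
      using norm_triangle_ineq[of "a+b" e] norm_triangle_ineq[of a b] by linarith
    have Eq: "(\<Sum>n=1..nat \<lfloor>x\<rfloor>. of_real (real n powr \<beta>) * phi_theta \<theta> n) - singular_series \<theta> * of_real (M_beta \<beta> x) - (C1 + C2)
        = (P1 - singular_series \<theta> * of_real (M_beta \<beta> x) - C1) + (of_real c * P2 - C2) + P3"
      unfolding L by (simp add: algebra_simps)
    have "norm ((\<Sum>n=1..nat \<lfloor>x\<rfloor>. of_real (real n powr \<beta>) * phi_theta \<theta> n) - singular_series \<theta> * of_real (M_beta \<beta> x) - (C1 + C2))
       \<le> norm (P1 - singular_series \<theta> * of_real (M_beta \<beta> x) - C1) + norm (of_real c * P2 - C2) + norm P3"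
      unfolding Eq by (rule tri)
    also have "\<dots> \<le> exp A * G1 \<sigma> \<kappa> \<beta> * x powr (\<sigma> + \<beta>) * (ln x + 1) powr \<kappa>
        + \<bar>c\<bar> * exp A * G2 \<sigma> \<kappa> \<beta> * x powr (\<sigma> + \<beta>) * (ln x + 1) powr \<kappa>
        + K1 * exp A * x powr (\<sigma> + \<beta>) * (ln x + 1) powr \<kappa>"
      using b1 b2 b3 by linarith
    also have "\<dots> = exp A * (G1 \<sigma> \<kappa> \<beta> + \<bar>c\<bar> * G2 \<sigma> \<kappa> \<beta> + K1) * x powr (\<sigma> + \<beta>) * (ln x + 1) powr \<kappa>"
      by (simp add: algebra_simps)
    finally show "norm ((\<Sum>n=1..nat \<lfloor>x\<rfloor>. of_real (real n powr \<beta>) * phi_theta \<theta> n)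
      - singular_series \<theta> * of_real (M_beta \<beta> x) - (C1 + C2))
    \<le> exp A * (G1 \<sigma> \<kappa> \<beta> + \<bar>c\<bar> * G2 \<sigma> \<kappa> \<beta> + K1) * x powr (\<sigma> + \<beta>) * (ln x + 1) powr \<kappa>" .
  qed
qed

end


theorem mainTheorem4:
  fixes \<sigma> \<kappa> A \<beta> :: real
  assumes "0 \<le> \<sigma>" "\<sigma> < 1" "\<kappa> \<ge> 0" "A \<ge> 0"
  shows "\<exists>K::real. \<forall>\<theta>::nat \<Rightarrow> complex.
           theta_admissible \<theta> \<and> condition1 \<theta> \<sigma> \<kappa> A \<longrightarrow>
             abs_convergent_prod (euler_factor \<theta>) \<and>
             (\<exists>C::complex. \<forall>x::real. x \<ge> 2 \<longrightarrow>
                norm ((\<Sum>n=1..nat \<lfloor>x\<rfloor>. of_real (real n powr \<beta>) * phi_theta \<theta> n)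
                      - singular_series \<theta> * of_real (M_beta \<beta> x) - C)
                \<le> K * x powr (\<sigma> + \<beta>) * ln x powr \<kappa>)"
proof -
  obtain c K1 where cK: "K1 \<ge> 0" "\<forall>y\<ge>1. \<bar>Tb \<beta> y - M_beta \<beta> y - c\<bar> \<le> K1 * y powr \<beta>"
    using T_asymp[of \<beta>] by blast
  define K0 where "K0 = exp A * (G1 \<sigma> \<kappa> \<beta> + \<bar>c\<bar> * G2 \<sigma> \<kappa> \<beta> + K1)"
  define K where "K = K0 * (1 + 1 / ln 2) powr \<kappa>"
  have g1: "G1 \<sigma> \<kappa> \<beta> \<ge> 0" using assms Gc_nonneg[of "\<sigma> - 1"] by (simp add: G1_def)
  have g2: "G2 \<sigma> \<kappa> \<beta> \<ge> 0" using Gc_nonneg[of "\<beta> + \<sigma>"] by (simp add: G2_def)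
  have K0: "K0 \<ge> 0" unfolding K0_def using g1 g2 cK(1) by (intro mult_nonneg_nonneg add_nonneg_nonneg) auto
  have lnb: "K0 * x powr (\<sigma> + \<beta>) * (ln x + 1) powr \<kappa> \<le> K * x powr (\<sigma> + \<beta>) * ln x powr \<kappa>" if x: "x \<ge> 2" for x
  proof -
    have l2: "ln 2 > (0::real)" by simp
    have lx: "ln x \<ge> ln 2" using x by simp
    hence "1 \<le> ln x / ln 2" using l2 by simp
    hence "ln x + 1 \<le> (1 + 1 / ln 2) * ln x" by (simp add: algebra_simps)
    hence "(ln x + 1) powr \<kappa> \<le> ((1 + 1 / ln 2) * ln x) powr \<kappa>"
      using x assms(3) by (intro powr_mono2) auto
    also have "\<dots> = (1 + 1 / ln 2) powr \<kappa> * ln x powr \<kappa>" by (simp add: powr_mult)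
    finally have "(ln x + 1) powr \<kappa> \<le> (1 + 1 / ln 2) powr \<kappa> * ln x powr \<kappa>" .
    hence "K0 * x powr (\<sigma> + \<beta>) * (ln x + 1) powr \<kappa> \<le> K0 * x powr (\<sigma> + \<beta>) * ((1 + 1 / ln 2) powr \<kappa> * ln x powr \<kappa>)"
      using K0 by (intro mult_left_mono) auto
    thus ?thesis by (simp add: K_def mult_ac)
  qed
  show ?thesis
  proof (intro exI[of _ K] allI impI)
    fix \<theta> :: "nat \<Rightarrow> complex" assume h: "theta_admissible \<theta> \<and> condition1 \<theta> \<sigma> \<kappa> A"
    interpret thctx \<theta> \<sigma> \<kappa> A using h assms by unfold_locales auto
    obtain C where C: "\<forall>x\<ge>2. norm ((\<Sum>n=1..nat \<lfloor>x\<rfloor>. of_real (real n powr \<beta>) * phi_theta \<theta> n)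
      - singular_series \<theta> * of_real (M_beta \<beta> x) - C) \<le> K0 * x powr (\<sigma> + \<beta>) * (ln x + 1) powr \<kappa>"
      using main_est[OF cK] unfolding K0_def by blast
    show "abs_convergent_prod (euler_factor \<theta>) \<and>
             (\<exists>C::complex. \<forall>x::real. x \<ge> 2 \<longrightarrow>
                norm ((\<Sum>n=1..nat \<lfloor>x\<rfloor>. of_real (real n powr \<beta>) * phi_theta \<theta> n)
                      - singular_series \<theta> * of_real (M_beta \<beta> x) - C)
                \<le> K * x powr (\<sigma> + \<beta>) * ln x powr \<kappa>)"
      using euler_abs C lnb by (meson order_trans)
  qed
qed


end
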